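(* For every $N\ge 2$ and every $x\in\{0,1,\dots,N-2\}$, $$|2p(x)-1|\le\frac{1}{(N-x-2)!}.$$
   Context: For $\sigma\in\mathcal{S}_N$, $\eta_1(\sigma)$ is the number of fixed points and $\eta_2(\sigma)$ the number of 2-cycles of $\sigma$; $\nu$ is the uniform measure on $\mathcal{S}_N$, and for $x\in\{0,\dots,N\}\setminus\{N-1\}$, $p(x)=\mathbb{E}_\nu[\eta_2\mid\eta_1=x]$. *)

theory Defs
  imports "HOL-Probability.Probability" "HOL-Combinatorics.Permutations"
begin

definition perms :: "nat \<Rightarrow> (nat \<Rightarrow> nat) set" where
  "perms N = {\<sigma>. \<sigma> permutes {..<N}}"

definition eta1 :: "nat \<Rightarrow> (nat \<Rightarrow> nat) \<Rightarrow> nat" where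
  "eta1 N \<sigma> = card {i \<in> {..<N}. \<sigma> i = i}"

definition eta2 :: "nat \<Rightarrow> (nat \<Rightarrow> nat) \<Rightarrow> nat" where
  "eta2 N \<sigma> = card {{i, \<sigma> i} | i. i \<in> {..<N} \<and> \<sigma> i \<noteq> i \<and> \<sigma> (\<sigma> i) = i}"

definition nu :: "nat \<Rightarrow> (nat \<Rightarrow> nat) pmf" where
  "nu N = pmf_of_set (perms N)"

text \<open>p(x) = E_nu[eta2 | eta1 = x].\<close>
definition pcond :: "nat \<Rightarrow> nat \<Rightarrow> real" where
  "pcond N x = measure_pmf.expectation (cond_pmf (nu N) {\<sigma>. eta1 N \<sigma> = x}) (\<lambda>\<sigma>. real (eta2 N \<sigma>))"

end

theory Submission imports Defs "HOL-Computational_Algebra.Formal_Power_Series"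
begin

definition der :: "nat set \<Rightarrow> (nat \<Rightarrow> nat) set" where
  "der S = {\<pi>. \<pi> permutes S \<and> (\<forall>x\<in>S. \<pi> x \<noteq> x)}"

definition dn :: "nat \<Rightarrow> nat" where "dn n = card (der {..<n})"

lemma finite_der: "finite S \<Longrightarrow> finite (der S)"
  unfolding der_def by (rule finite_subset[OF _ finite_permutations[of S]]) auto

lemma card_der: assumes "finite S" shows "card (der S) = dn (card S)"
proof -
  obtain h where h: "bij_betw h {0..<card S} S" using ex_bij_betw_nat_finite[OF assms] by blast
  from bij_betw_derangements[OF h] have "card (der {0..<card S}) = card (der S)"
    unfolding der_def by (rule bij_betw_same_card)
  then show ?thesis unfolding dn_def by (simp add: atLeast0LessThan)
qed

lemma fixset_der:
  assumes "F \<subseteq> U"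
  shows "{\<sigma>. \<sigma> permutes U \<and> {i\<in>U. \<sigma> i = i} = F} = der (U - F)"
proof (intro set_eqI iffI)
  fix \<sigma> assume "\<sigma> \<in> {\<sigma>. \<sigma> permutes U \<and> {i\<in>U. \<sigma> i = i} = F}"
  then have p: "\<sigma> permutes U" and F: "{i\<in>U. \<sigma> i = i} = F" by auto
  have "\<sigma> permutes (U - F)"
    by (rule permutes_superset[OF p]) (use F in auto)
  moreover have "\<forall>x\<in>U-F. \<sigma> x \<noteq> x" using F by auto
  ultimately show "\<sigma> \<in> der (U - F)" unfolding der_def by auto
next
  fix \<sigma> assume "\<sigma> \<in> der (U - F)"
  then have p: "\<sigma> permutes (U - F)" and d: "\<forall>x\<in>U-F. \<sigma> x \<noteq> x" unfolding der_def by auto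
  have "\<sigma> permutes U" by (rule permutes_subset[OF p]) auto
  moreover have "{i\<in>U. \<sigma> i = i} = F"
    using d assms permutes_not_in[OF p] by auto
  ultimately show "\<sigma> \<in> {\<sigma>. \<sigma> permutes U \<and> {i\<in>U. \<sigma> i = i} = F}" by auto
qed

definition Px :: "nat \<Rightarrow> nat \<Rightarrow> (nat \<Rightarrow> nat) set" where
  "Px N x = {\<sigma>\<in>perms N. eta1 N \<sigma> = x}"

lemma Px_Union: "Px N x = (\<Union>F\<in>{F. F \<subseteq> {..<N} \<and> card F = x}. der ({..<N} - F))"
proof -
  have "Px N x = (\<Union>F\<in>{F. F \<subseteq> {..<N} \<and> card F = x}. {\<sigma>. \<sigma> permutes {..<N} \<and> {i\<in>{..<N}. \<sigma> i = i} = F})"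
    unfolding Px_def perms_def eta1_def by auto
  also have "\<dots> = (\<Union>F\<in>{F. F \<subseteq> {..<N} \<and> card F = x}. der ({..<N} - F))"
    using fixset_der by (intro SUP_cong) auto
  finally show ?thesis .
qed

lemma der_disj: "F \<subseteq> U \<Longrightarrow> G \<subseteq> U \<Longrightarrow> F \<noteq> G \<Longrightarrow> der (U - F) \<inter> der (U - G) = {}"
  using fixset_der[of F U] fixset_der[of G U] by auto

lemma finite_Px: "finite (Px N x)"
  unfolding Px_def perms_def by (rule finite_subset[OF _ finite_permutations[of "{..<N}"]]) auto

lemma card_Px: "card (Px N x) = (N choose x) * dn (N - x)"
proof -
  have "card (Px N x) = (\<Sum>F\<in>{F. F \<subseteq> {..<N} \<and> card F = x}. card (der ({..<N} - F)))"
    unfolding Px_Union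
    by (rule card_UN_disjoint) (auto simp: finite_der der_disj)
  also have "\<dots> = (\<Sum>F\<in>{F. F \<subseteq> {..<N} \<and> card F = x}. dn (N - x))"
    by (intro sum.cong refl) (auto simp: card_der card_Diff_subset finite_subset)
  also have "\<dots> = (N choose x) * dn (N - x)"
    using n_subsets[of "{..<N}" x] by simp
  finally show ?thesis .
qed

lemma eta1_le: "eta1 n \<sigma> \<le> n"
  unfolding eta1_def using card_mono[of "{..<n}" "{i \<in> {..<n}. \<sigma> i = i}"] by auto

lemma perms_Union: "perms n = (\<Union>x\<in>{..n}. Px n x)"
  unfolding Px_def using eta1_le[of n] by blast

lemma fact_dn: "fact n = (\<Sum>x\<le>n. (n choose x) * dn (n - x))"
proof -
  have "card (\<Union>x\<in>{..n}. Px n x) = (\<Sum>x\<le>n. card (Px n x))"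
    apply (rule card_UN_disjoint)
      apply simp
     apply (simp add: finite_Px)
    apply (auto simp: Px_def)
    done
  moreover have "card (perms n) = fact n" unfolding perms_def by (simp add: card_permutations)
  ultimately show ?thesis by (simp add: card_Px perms_Union)
qed

lemma dn_closed: "real (dn n) = fact n * (\<Sum>i\<le>n. (-1)^i / fact i)"
proof -
  define A :: "real fps" where "A = Abs_fps (\<lambda>n. real (dn n) / fact n)"
  have "fps_exp 1 * A = Abs_fps (\<lambda>_. 1)"
  proof (rule fps_ext)
    fix n
    have "fps_nth (fps_exp 1 * A) n = (\<Sum>i=0..n. 1 / fact i * (real (dn (n - i)) / fact (n - i)))"
      by (simp add: fps_mult_nth A_def)
    also have "\<dots> = (\<Sum>i=0..n. real (n choose i) * real (dn (n - i))) / fact n"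
      by (simp add: sum_divide_distrib binomial_fact)
    also have "\<dots> = 1"
    proof -
      have h: "(\<Sum>i\<le>n. real (n choose i) * real (dn (n - i))) = fact n"
        using arg_cong[OF fact_dn[of n], of real] by simp
      show ?thesis by (simp add: atLeast0AtMost h)
    qed
    finally show "fps_nth (fps_exp 1 * A) n = fps_nth (Abs_fps (\<lambda>_. 1::real)) n" by simp
  qed
  then have "fps_exp (-1) * (fps_exp 1 * A) = fps_exp (-1) * Abs_fps (\<lambda>_. 1)" by simp
  moreover have "fps_exp (-1) * (fps_exp 1 * A) = A"
    by (simp add: mult.assoc[symmetric] fps_exp_add_mult[symmetric])
  ultimately have "fps_nth A n = fps_nth (fps_exp (-1) * Abs_fps (\<lambda>_. 1)) n" by simp
  moreover have "(\<Sum>i\<le>n. (-1)^(n-i) / fact (n-i)) = (\<Sum>i\<le>n. (-1)^i / fact i :: real)"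
    by (rule sum.reindex_bij_witness[of _ "\<lambda>i. n - i" "\<lambda>i. n - i"]) auto
  ultimately show ?thesis by (simp add: A_def fps_mult_nth atLeast0AtMost field_simps)
qed


lemma dn_rec: "real (dn (Suc n)) = real (Suc n) * real (dn n) + (-1)^(Suc n)"
proof -
  have "real (dn (Suc n)) = fact (Suc n) * ((\<Sum>i\<le>n. (-1)^i / fact i) + (-1)^(Suc n) / fact (Suc n))"
    unfolding dn_closed by simp
  also have "\<dots> = fact (Suc n) * (\<Sum>i\<le>n. (-1)^i / fact i) + (-1)^(Suc n)"
  proof -
    have "fact (Suc n) * ((-1)^(Suc n) / fact (Suc n)) = ((-1::real)^(Suc n))" using fact_nonzero[of "Suc n", where 'a=real] by (metis nonzero_mult_div_cancel_left times_divide_eq_right)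
    then show ?thesis by (simp only: distrib_left)
  qed
  also have "\<dots> = real (Suc n) * real (dn n) + (-1)^(Suc n)"
    unfolding dn_closed fact_Suc[of n] by simp
  finally show ?thesis .
qed

lemma dn_lower: "fact (Suc k) \<le> real (dn (Suc (Suc k)))"
proof (induction k)
  case 0
  then show ?case using dn_rec[of 1] dn_rec[of 0] by (simp add: dn_def der_def)
next
  case (Suc k)
  have f1: "(1::real) \<le> fact (Suc k)" by (rule fact_ge_1)
  have "real (dn (Suc (Suc (Suc k)))) \<ge> real (Suc (Suc (Suc k))) * real (dn (Suc (Suc k))) - 1"
    using dn_rec[of "Suc (Suc k)"] by (cases "even k") auto
  moreover have "real (Suc (Suc (Suc k))) * real (dn (Suc (Suc k))) \<ge> real (Suc (Suc (Suc k))) * fact (Suc k)"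
    using Suc.IH by (intro mult_left_mono) auto
  moreover have "fact (Suc (Suc k)) = real (Suc (Suc k)) * (fact (Suc k) :: real)" by simp
  ultimately show ?case using f1 by (simp add: algebra_simps)
qed

lemma key_ineq:
  assumes "m \<ge> 2"
  shows "\<bar>2 * (real (m choose 2) * real (dn (m - 2)) / real (dn m)) - 1\<bar> \<le> 1 / fact (m - 2)"
proof -
  obtain k where m: "m = Suc (Suc k)" using assms by (metis add_2_eq_Suc le_Suc_ex)
  have c2: "2 * real (m choose 2) = real (Suc (Suc k)) * real (Suc k)"
    unfolding m using binomial_fact[of 2 "Suc (Suc k)", where 'a=real] by simp
  have r1: "real (dn (Suc k)) = real (Suc k) * real (dn k) + (-1)^(Suc k)" by (rule dn_rec)
  have r2: "real (dn (Suc (Suc k))) = real (Suc (Suc k)) * real (dn (Suc k)) + (-1)^(Suc (Suc k))" by (rule dn_rec)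
  have diff: "real (Suc (Suc k)) * real (Suc k) * real (dn k) - real (dn (Suc (Suc k))) = (-1)^k * real (Suc k)"
    unfolding r2 r1 by (simp add: algebra_simps)
  have low: "fact (Suc k) \<le> real (dn (Suc (Suc k)))" by (rule dn_lower)
  have fpos: "(0::real) < fact (Suc k)" by simp
  have dpos: "real (dn (Suc (Suc k))) > 0" using low fpos by linarith
  have "2 * (real (m choose 2) * real (dn (m - 2)) / real (dn m)) - 1
      = (real (Suc (Suc k)) * real (Suc k) * real (dn k) - real (dn (Suc (Suc k)))) / real (dn (Suc (Suc k)))"
    using dpos c2 unfolding m by (simp add: field_simps)
  also have "\<dots> = (-1)^k * real (Suc k) / real (dn (Suc (Suc k)))" by (simp only: diff)
  finally have eq: "\<bar>2 * (real (m choose 2) * real (dn (m - 2)) / real (dn m)) - 1\<bar> = real (Suc k) / real (dn (Suc (Suc k)))"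
    using dpos by (simp add: abs_mult abs_divide)
  have "real (Suc k) / real (dn (Suc (Suc k))) \<le> 1 / fact k"
  proof -
    have "real (Suc k) * fact k \<le> real (dn (Suc (Suc k)))" using low by simp
    then show ?thesis using dpos by (simp add: field_simps)
  qed
  then show ?thesis using eq m by simp
qed

definition T :: "nat \<Rightarrow> (nat \<Rightarrow> nat) \<Rightarrow> nat set set" where
  "T N \<sigma> = {{i, \<sigma> i} | i. i \<in> {..<N} \<and> \<sigma> i \<noteq> i \<and> \<sigma> (\<sigma> i) = i}"

lemma eta2_T: "eta2 N \<sigma> = card (T N \<sigma>)" unfolding eta2_def T_def by simp

lemma T_sub:
  assumes "\<sigma> \<in> der S"
  shows "T N \<sigma> \<subseteq> {e. e \<subseteq> S \<and> card e = 2}"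
proof
  fix e assume "e \<in> T N \<sigma>"
  then obtain i where e: "e = {i, \<sigma> i}" and ne: "\<sigma> i \<noteq> i" unfolding T_def by auto
  have p: "\<sigma> permutes S" using assms unfolding der_def by auto
  have iS: "i \<in> S" using permutes_not_in[OF p] ne by blast
  have "\<sigma> i \<in> S" using permutes_in_image[OF p] iS by simp
  then show "e \<in> {e. e \<subseteq> S \<and> card e = 2}" using e iS ne by auto
qed

lemma T_mem:
  assumes "S \<subseteq> {..<N}" "\<sigma> \<in> der S" "a \<noteq> b" "a \<in> S" "b \<in> S"
  shows "{a, b} \<in> T N \<sigma> \<longleftrightarrow> \<sigma> a = b \<and> \<sigma> b = a"
proof
  assume "{a, b} \<in> T N \<sigma>"
  then obtain i where e: "{a, b} = {i, \<sigma> i}" and h: "\<sigma> (\<sigma> i) = i" unfolding T_def by auto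
  then show "\<sigma> a = b \<and> \<sigma> b = a" by (auto simp: doubleton_eq_iff)
next
  assume h: "\<sigma> a = b \<and> \<sigma> b = a"
  then show "{a, b} \<in> T N \<sigma>" unfolding T_def using assms by auto
qed

lemma card_pair:
  assumes "finite S" "a \<noteq> b" "a \<in> S" "b \<in> S"
  shows "card {\<sigma> \<in> der S. \<sigma> a = b \<and> \<sigma> b = a} = dn (card S - 2)"
proof -
  let ?f = "\<lambda>\<sigma>. Transposition.transpose a b \<circ> \<sigma>"
  have inv: "?f (?f \<sigma>) = \<sigma>" for \<sigma> by (auto simp: fun_eq_iff)
  have "bij_betw ?f {\<sigma> \<in> der S. \<sigma> a = b \<and> \<sigma> b = a} (der (S - {a, b}))"
  proof (rule bij_betw_byWitness[where f' = ?f])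
    show "\<forall>x\<in>{\<sigma> \<in> der S. \<sigma> a = b \<and> \<sigma> b = a}. ?f (?f x) = x" using inv by blast
    show "\<forall>x\<in>der (S - {a, b}). ?f (?f x) = x" using inv by blast
    show "?f ` {\<sigma> \<in> der S. \<sigma> a = b \<and> \<sigma> b = a} \<subseteq> der (S - {a, b})"
    proof (rule image_subsetI)
      fix \<sigma> assume "\<sigma> \<in> {\<sigma> \<in> der S. \<sigma> a = b \<and> \<sigma> b = a}"
      then have d: "\<sigma> \<in> der S" and ab: "\<sigma> a = b" "\<sigma> b = a" by auto
      have p: "\<sigma> permutes S" and nf: "\<forall>x\<in>S. \<sigma> x \<noteq> x" using d unfolding der_def by auto
      have inj: "inj \<sigma>" using p permutes_inj by blast
      have p2: "?f \<sigma> permutes S"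
        by (rule permutes_compose[OF p permutes_swap_id]) (use assms in auto)
      have p3: "?f \<sigma> permutes (S - {a, b})"
        by (rule permutes_superset[OF p2]) (use ab in \<open>auto simp: transpose_def\<close>)
      have "\<forall>x\<in>S - {a, b}. ?f \<sigma> x \<noteq> x"
      proof
        fix x assume x: "x \<in> S - {a, b}"
        have "\<sigma> x \<noteq> a" using inj ab x by (metis DiffD2 injD insertCI)
        moreover have "\<sigma> x \<noteq> b" using inj ab x by (metis DiffD2 injD insertCI)
        ultimately show "?f \<sigma> x \<noteq> x" using nf x by (auto simp: transpose_def)
      qed
      then show "?f \<sigma> \<in> der (S - {a, b})" using p3 unfolding der_def by auto
    qed
    show "?f ` der (S - {a, b}) \<subseteq> {\<sigma> \<in> der S. \<sigma> a = b \<and> \<sigma> b = a}"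
    proof (rule image_subsetI)
      fix \<tau> assume d: "\<tau> \<in> der (S - {a, b})"
      have p: "\<tau> permutes (S - {a, b})" and nf: "\<forall>x\<in>S - {a, b}. \<tau> x \<noteq> x" using d unfolding der_def by auto
      have pS: "\<tau> permutes S" by (rule permutes_subset[OF p]) auto
      have ta: "\<tau> a = a" "\<tau> b = b" using permutes_not_in[OF p] by auto
      have p2: "?f \<tau> permutes S"
        by (rule permutes_compose[OF pS permutes_swap_id]) (use assms in auto)
      have "\<forall>x\<in>S. ?f \<tau> x \<noteq> x"
      proof
        fix x assume x: "x \<in> S"
        show "?f \<tau> x \<noteq> x"
        proof (cases "x \<in> {a, b}")
          case True then show ?thesis using ta assms by (auto simp: transpose_def)
        next
          case False
          then have "\<tau> x \<in> S - {a, b}" using permutes_in_image[OF p] x by auto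
          then show ?thesis using nf x False by (auto simp: transpose_def)
        qed
      qed
      then have "?f \<tau> \<in> der S" using p2 unfolding der_def by auto
      then show "?f \<tau> \<in> {\<sigma> \<in> der S. \<sigma> a = b \<and> \<sigma> b = a}" using ta by simp
    qed
  qed
  then have "card {\<sigma> \<in> der S. \<sigma> a = b \<and> \<sigma> b = a} = card (der (S - {a, b}))"
    by (rule bij_betw_same_card)
  also have "\<dots> = dn (card S - 2)"
    using assms by (simp add: card_der numeral_2_eq_2)
  finally show ?thesis .
qed

lemma sum_eta2_der:
  assumes "finite S" "S \<subseteq> {..<N}"
  shows "(\<Sum>\<sigma>\<in>der S. eta2 N \<sigma>) = (card S choose 2) * dn (card S - 2)"
proof -
  define E where "E = {e. e \<subseteq> S \<and> card e = 2}"
  have finE: "finite E" unfolding E_def using assms(1) by (simp add: finite_subset)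
  have "(\<Sum>\<sigma>\<in>der S. eta2 N \<sigma>) = (\<Sum>\<sigma>\<in>der S. \<Sum>e\<in>E. if e \<in> T N \<sigma> then 1 else 0)"
  proof (rule sum.cong[OF refl])
    fix \<sigma> assume d: "\<sigma> \<in> der S"
    have "(\<Sum>e\<in>E. if e \<in> T N \<sigma> then 1 else (0::nat)) = card (E \<inter> T N \<sigma>)"
      using finE by (simp add: sum.If_cases)
    also have "E \<inter> T N \<sigma> = T N \<sigma>" using T_sub[OF d] unfolding E_def by blast
    finally show "eta2 N \<sigma> = (\<Sum>e\<in>E. if e \<in> T N \<sigma> then 1 else 0)" by (simp add: eta2_T)
  qed
  also have "\<dots> = (\<Sum>e\<in>E. \<Sum>\<sigma>\<in>der S. if e \<in> T N \<sigma> then 1 else 0)" by (rule sum.swap)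
  also have "\<dots> = (\<Sum>e\<in>E. dn (card S - 2))"
  proof (rule sum.cong[OF refl])
    fix e assume "e \<in> E"
    then obtain a b where e: "e = {a, b}" "a \<noteq> b" and ab: "a \<in> S" "b \<in> S"
      unfolding E_def by (auto simp: card_2_iff)
    have "(\<Sum>\<sigma>\<in>der S. if e \<in> T N \<sigma> then 1 else (0::nat)) = card (der S \<inter> {\<sigma>. e \<in> T N \<sigma>})"
      using finite_der[OF assms(1)] by (simp add: sum.If_cases)
    also have "der S \<inter> {\<sigma>. e \<in> T N \<sigma>} = {\<sigma> \<in> der S. \<sigma> a = b \<and> \<sigma> b = a}"
      using T_mem[OF assms(2) _ e(2) ab] e(1) by blast
    also have "card \<dots> = dn (card S - 2)" by (rule card_pair[OF assms(1) e(2) ab])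
    finally show "(\<Sum>\<sigma>\<in>der S. if e \<in> T N \<sigma> then 1 else 0) = dn (card S - 2)" .
  qed
  also have "\<dots> = card E * dn (card S - 2)" by simp
  also have "card E = card S choose 2" unfolding E_def by (rule n_subsets[OF assms(1)])
  finally show ?thesis .
qed

lemma sum_eta2_Px: "(\<Sum>\<sigma>\<in>Px N x. eta2 N \<sigma>) = (N choose x) * (((N - x) choose 2) * dn (N - x - 2))"
proof -
  have "(\<Sum>\<sigma>\<in>Px N x. eta2 N \<sigma>) = (\<Sum>F\<in>{F. F \<subseteq> {..<N} \<and> card F = x}. \<Sum>\<sigma>\<in>der ({..<N} - F). eta2 N \<sigma>)"
    unfolding Px_Union
    by (rule sum.UNION_disjoint) (auto simp: finite_der der_disj)
  also have "\<dots> = (\<Sum>F\<in>{F. F \<subseteq> {..<N} \<and> card F = x}. ((N - x) choose 2) * dn (N - x - 2))"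
  proof (intro sum.cong refl)
    fix F assume F: "F \<in> {F. F \<subseteq> {..<N} \<and> card F = x}"
    then have c: "card ({..<N} - F) = N - x" by (auto simp: card_Diff_subset finite_subset)
    show "(\<Sum>\<sigma>\<in>der ({..<N} - F). eta2 N \<sigma>) = ((N - x) choose 2) * dn (N - x - 2)"
      using sum_eta2_der[of "{..<N} - F" N] c by simp
  qed
  also have "\<dots> = (N choose x) * (((N - x) choose 2) * dn (N - x - 2))"
    using n_subsets[of "{..<N}" x] by simp
  finally show ?thesis .
qed

lemma pcond_eq:
  assumes ne: "Px N x \<noteq> {}"
  shows "pcond N x = (\<Sum>\<sigma>\<in>Px N x. real (eta2 N \<sigma>)) / card (Px N x)"
proof -
  have finP: "finite (perms N)" unfolding perms_def by (simp add: finite_permutations)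
  have neP: "perms N \<noteq> {}" unfolding perms_def using permutes_id by blast
  have PxI: "Px N x = perms N \<inter> {\<sigma>. eta1 N \<sigma> = x}" unfolding Px_def by auto
  have sne: "set_pmf (nu N) \<inter> {\<sigma>. eta1 N \<sigma> = x} \<noteq> {}"
    unfolding nu_def using finP neP ne PxI by simp
  have "cond_pmf (nu N) {\<sigma>. eta1 N \<sigma> = x} = pmf_of_set (Px N x)"
  proof (rule pmf_eqI)
    fix \<sigma>
    have cP: "card (perms N) > 0" using finP neP by (simp add: card_gt_0_iff)
    have cPx: "card (Px N x) > 0" using finite_Px ne by (simp add: card_gt_0_iff)
    show "pmf (cond_pmf (nu N) {\<sigma>. eta1 N \<sigma> = x}) \<sigma> = pmf (pmf_of_set (Px N x)) \<sigma>"
      unfolding pmf_cond[OF sne] unfolding nu_def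
      using finP neP ne finite_Px[of N x] cP cPx
      by (auto simp: measure_pmf_of_set PxI[symmetric] indicator_def Px_def)
  qed
  then show ?thesis unfolding pcond_def
    using ne finite_Px[of N x] by (simp add: integral_pmf_of_set)
qed

theorem proposition4p1:
  fixes N x :: nat
  assumes "N \<ge> 2" and "x \<le> N - 2"
  shows "\<bar>2 * pcond N x - 1\<bar> \<le> 1 / fact (N - x - 2)"
proof -
  define m where "m = N - x"
  have m2: "m \<ge> 2" using assms unfolding m_def by linarith
  then obtain k where k: "m = Suc (Suc k)" by (metis add_2_eq_Suc le_Suc_ex)
  have dpos: "dn m > 0"
    using dn_lower[of k] fact_ge_1[of "Suc k", where 'a=real] unfolding k by linarith
  have cpos: "(N choose x) > 0" using assms by simp
  have cardP: "card (Px N x) = (N choose x) * dn m" by (simp add: card_Px m_def)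
  have ne: "Px N x \<noteq> {}" using cardP dpos cpos by (metis card.empty mult_is_0 not_gr0)
  have "pcond N x = real ((N choose x) * ((m choose 2) * dn (m - 2))) / real ((N choose x) * dn m)"
    unfolding pcond_eq[OF ne] cardP
    by (simp only: of_nat_sum[symmetric] sum_eta2_Px m_def)
  also have "\<dots> = real (m choose 2) * real (dn (m - 2)) / real (dn m)"
    using cpos by simp
  finally have p: "pcond N x = real (m choose 2) * real (dn (m - 2)) / real (dn m)" .
  show ?thesis using key_ineq[OF m2] unfolding p m_def by simp
qed

end
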